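(* For all integers $n\geq0$, \[ \sum_{j=0}^n\binom{2j}{j}\frac{O_j-H_{n-j}}{4^j(n+1-j)}=0. \]
   Context: $H_n=\sum_{j=1}^n\frac1j$ ($H_0=0$) and $O_n=\sum_{j=1}^n\frac1{2j-1}$ ($O_0=0$). *)

theory Defs
  imports "HOL-Analysis.Analysis"
begin

definition oharm :: "nat \<Rightarrow> real" where
  "oharm n = (\<Sum>j=1..n. 1 / (2 * real j - 1))"

end

theory Submission
  imports Defs "HOL-Computational_Algebra.Formal_Power_Series"
begin

declare binomial_Suc_Suc[simp del]

lemma cbin_rec: "real ((2*Suc j) choose Suc j) * (real j + 1) = 2 * (2*real j+1) * real ((2*j) choose j)"
proof -
  have a: "Suc (Suc (2*j)) * (Suc (2*j) choose j) = (Suc (Suc (2*j)) choose Suc j) * Suc j"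
    by (rule Suc_times_binomial_eq)
  have b: "Suc (2*j) * ((2*j) choose j) = (Suc (2*j) choose Suc j) * Suc j"
    by (rule Suc_times_binomial_eq)
  have s: "(Suc (2*j) choose Suc j) = (Suc (2*j) choose j)"
    using binomial_symmetric[of j "Suc (2*j)"] by (simp del: binomial_Suc_Suc)
  have e: "2 * Suc j = Suc (Suc (2*j))" by simp
  define A where "A = real (Suc (Suc (2*j)) choose Suc j)"
  define B where "B = real (Suc (2*j) choose j)"
  define C where "C = real ((2*j) choose j)"
  have a': "(2*real j+2) * B = A * (real j + 1)"
    unfolding A_def B_def using arg_cong[OF a, of real] by (simp only: of_nat_mult of_nat_Suc) (simp add: algebra_simps)
  have b': "(2*real j+1) * C = B * (real j + 1)"
    unfolding C_def B_def using arg_cong[OF b, of real] s by (simp only: of_nat_mult of_nat_Suc) (simp add: algebra_simps)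
  have "A * (real j + 1) = 2 * (2*real j+1) * C"
    using a' b' by (simp add: algebra_simps)
  then show ?thesis unfolding A_def C_def e .
qed

definition cc :: "nat \<Rightarrow> real" where "cc j = real ((2*j) choose j) / 4 ^ j"

lemma cc_rec: "cc (Suc j) = cc j * (2 * real j + 1) / (2 * real j + 2)"
proof -
  define A where "A = real ((2*Suc j) choose Suc j)"
  define C where "C = real ((2*j) choose j)"
  have h: "A * (real j + 1) = 2 * (2*real j+1) * C" using cbin_rec[of j] unfolding A_def C_def .
  have "cc (Suc j) = A / (4 * 4^j)" unfolding cc_def A_def by simp
  also have "A = 2 * (2*real j+1) * C / (real j + 1)"
    using h by (simp add: field_simps)
  also have "2 * (2*real j+1) * C / (real j + 1) / (4 * 4^j) = (C / 4^j) * (2 * real j + 1) / (2 * real j + 2)"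
  proof -
    have p: "(4::real)^j > 0" "real j + 1 > 0" by auto
    have "2 * (2*real j+1) * C / (real j + 1) / (4 * 4^j) = (2 * ((2*real j+1) * C)) / (2 * ((real j + 1) * (2 * 4^j)))"
      by (simp add: divide_divide_eq_left algebra_simps)
    also have "\<dots> = ((2*real j+1) * C) / ((real j + 1) * (2 * 4^j))"
      by (rule mult_divide_mult_cancel_left) simp
    also have "\<dots> = (C / 4^j) * (2 * real j + 1) / (2 * real j + 2)"
      using p by (simp add: divide_simps)
    finally show ?thesis .
  qed
  finally show ?thesis unfolding cc_def C_def .
qed

lemma oharm_Suc: "oharm (Suc j) = oharm j + 1 / (2 * real j + 1)"
  unfolding oharm_def by simp

lemma omx_nth: "fps_nth ((1 - fps_X) * f) k = fps_nth (f) k - (if k = 0 then 0 else fps_nth (f) (k - 1))"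
  for f :: "real fps"
  by (simp add: algebra_simps)

lemma omxd_nth: "fps_nth ((1 - fps_X) * fps_deriv f) k = real (k+1) * fps_nth f (k+1) - real k * fps_nth f k"
  for f :: "real fps"
  unfolding omx_nth by (cases k) auto

lemma uniq:
  fixes D :: "real fps"
  assumes h: "(1 - fps_X) * fps_deriv D = fps_const a * D" and h0: "fps_nth (D) 0 = 0"
  shows "D = 0"
proof -
  have rec: "real (k+1) * fps_nth (D) (k+1) = (real k + a) * fps_nth (D) k" for k
  proof -
    have "fps_nth ((1 - fps_X) * fps_deriv D) k = fps_nth (fps_const a * D) k" using h by simp
    then show ?thesis unfolding omx_nth by (cases k) (auto simp: algebra_simps)
  qed
  have "fps_nth (D) k = 0" for k
  proof (induction k)
    case 0 then show ?case using h0 by simp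
  next
    case (Suc k) then show ?case using rec[of k] by simp
  qed
  then show ?thesis by (intro fps_ext) simp
qed

definition PP :: "real fps" where "PP = Abs_fps cc"
definition LL :: "real fps" where "LL = Abs_fps (\<lambda>k. if k = 0 then 0 else 1 / real k)"
definition GG :: "real fps" where "GG = Abs_fps (\<lambda>j. 2 * cc j * oharm j)"
definition RR :: "real fps" where "RR = Abs_fps (\<lambda>m. if m = 0 then 0 else 2 * harm (m - 1) / real m)"

lemma PP_deriv: "(1 - fps_X) * fps_deriv PP = fps_const (1/2) * PP"
proof (rule fps_ext)
  fix k
  have "real (k+1) * cc (k+1) - real k * cc k = cc k / 2"
    by (simp add: cc_rec field_simps)
  then show "fps_nth ((1 - fps_X) * fps_deriv PP) k = fps_nth (fps_const (1/2) * PP) k"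
    unfolding omxd_nth by (simp add: PP_def)
qed

lemma LL_deriv: "(1 - fps_X) * fps_deriv LL = 1"
proof (rule fps_ext)
  fix k
  show "fps_nth ((1 - fps_X) * fps_deriv LL) k = fps_nth (1::real fps) k"
    unfolding omxd_nth by (cases k) (auto simp: LL_def field_simps)
qed

lemma GG_deriv: "(1 - fps_X) * fps_deriv GG = fps_const (1/2) * GG + PP"
proof (rule fps_ext)
  fix k
  have c1: "real (k+1) * cc (k+1) = cc k * (2 * real k + 1) / 2"
    by (simp add: cc_rec field_simps)
  have o1: "(2 * real k + 1) * oharm (k+1) = (2 * real k + 1) * oharm k + 1"
    by (simp add: oharm_Suc field_simps)
  have "real (k+1) * (2 * cc (k+1) * oharm (k+1)) = cc k * ((2 * real k + 1) * oharm (k+1))"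
    using c1 by (simp add: algebra_simps)
  also have "\<dots> = cc k * ((2 * real k + 1) * oharm k + 1)" using o1 by simp
  finally have "real (k+1) * (2 * cc (k+1) * oharm (k+1)) - real k * (2 * cc k * oharm k)
      = cc k * oharm k + cc k"
    by (simp add: algebra_simps)
  then show "fps_nth ((1 - fps_X) * fps_deriv GG) k = fps_nth (fps_const (1/2) * GG + PP) k"
    unfolding omxd_nth by (simp add: GG_def PP_def)
qed

lemma RR_deriv: "(1 - fps_X) * fps_deriv RR = 2 * LL"
proof (rule fps_ext)
  fix k
  have "real (k+1) * (2 * harm k / real (k+1)) - real k * (if k = 0 then 0 else 2 * harm (k - 1) / real k)
      = (if k = 0 then 0 else 2 / real k)"
  proof (cases k)
    case 0 then show ?thesis by (simp add: harm_def)
  next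
    case (Suc m)
    have "real (k+1) * (2 * harm k / real (k+1)) = 2 * harm k" by simp
    moreover have "real k * (2 * harm (k - 1) / real k) = 2 * harm m" using Suc by simp
    moreover have "harm k = harm m + 1 / real k" using Suc by (simp add: harm_Suc field_simps)
    ultimately show ?thesis using Suc by simp
  qed
  then show "fps_nth ((1 - fps_X) * fps_deriv RR) k = fps_nth (2 * LL) k"
    unfolding omxd_nth by (simp add: RR_def LL_def numeral_fps_const)
qed

lemma PL: "PP * LL = GG"
proof -
  define D where "D = PP * LL - GG"
  have "(1 - fps_X) * fps_deriv D
      = fps_deriv PP * LL * (1 - fps_X) + PP * ((1 - fps_X) * fps_deriv LL) - (1 - fps_X) * fps_deriv GG"
    unfolding D_def by (simp add: algebra_simps)
  also have "\<dots> = ((1 - fps_X) * fps_deriv PP) * LL + PP - (fps_const (1/2) * GG + PP)"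
    unfolding LL_deriv GG_deriv by (simp add: algebra_simps)
  also have "\<dots> = fps_const (1/2) * D"
    unfolding PP_deriv D_def by (simp add: algebra_simps)
  finally have "(1 - fps_X) * fps_deriv D = fps_const (1/2) * D" .
  moreover have "fps_nth D 0 = 0" by (simp add: D_def PP_def LL_def GG_def oharm_def)
  ultimately have "D = 0" by (rule uniq)
  then show ?thesis unfolding D_def by simp
qed

lemma LLR: "LL * LL = RR"
proof -
  define D where "D = LL * LL - RR"
  have "(1 - fps_X) * fps_deriv D
      = 2 * LL * ((1 - fps_X) * fps_deriv LL) - (1 - fps_X) * fps_deriv RR"
    unfolding D_def by (simp add: algebra_simps)
  also have "\<dots> = fps_const 0 * D"
    unfolding LL_deriv RR_deriv by simp
  finally have "(1 - fps_X) * fps_deriv D = fps_const 0 * D" .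
  moreover have "fps_nth D 0 = 0" by (simp add: D_def RR_def LL_def)
  ultimately have "D = 0" by (rule uniq)
  then show ?thesis unfolding D_def by simp
qed

theorem corollary5:
  fixes n :: nat
  shows "(\<Sum>j=0..n. real ((2*j) choose j) * (oharm j - harm (n - j))
            / (4 ^ j * real (n + 1 - j))) = 0"
proof -
  have "GG * LL = PP * RR" using PL LLR by (metis mult.assoc)
  then have e: "fps_nth (GG * LL) (Suc n) = fps_nth (PP * RR) (Suc n)" by simp
  have l: "fps_nth (GG * LL) (Suc n) = (\<Sum>j=0..n. 2 * cc j * oharm j / real (n + 1 - j))"
    unfolding fps_mult_nth sum.atLeast0_atMost_Suc
    by (auto simp: GG_def LL_def intro!: sum.cong)
  have r: "fps_nth (PP * RR) (Suc n) = (\<Sum>j=0..n. cc j * (2 * harm (n - j)) / real (n + 1 - j))"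
    unfolding fps_mult_nth sum.atLeast0_atMost_Suc
    by (auto simp: PP_def RR_def Suc_diff_le intro!: sum.cong)
  have "(\<Sum>j=0..n. real ((2*j) choose j) * (oharm j - harm (n - j)) / (4 ^ j * real (n + 1 - j)))
     = (1/2) * ((\<Sum>j=0..n. 2 * cc j * oharm j / real (n + 1 - j)) - (\<Sum>j=0..n. cc j * (2 * harm (n - j)) / real (n + 1 - j)))"
    by (simp add: sum_subtractf[symmetric] sum_distrib_left cc_def algebra_simps diff_divide_distrib)
  also have "\<dots> = 0" using e l r by simp
  finally show ?thesis .
qed

end
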